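(* Let $f:\mathbb{Z}\to\mathbb{R}$ be a function in $\ell^1(\mathbb{Z})$. Then $$\mathrm{Var}(Mf)\le\Big(2+\frac{146}{315}\Big)\|f\|_{\ell^1(\mathbb{Z})}.$$
   Context: Let $\mathbb{Z}^+=\{0,1,2,\dots\}$. For $f:\mathbb{Z}\to\mathbb{R}$, the discrete centered Hardy–Littlewood maximal operator is $$Mf(n)=\sup_{r\in\mathbb{Z}^+}\frac{1}{2r+1}\sum_{k=-r}^{r}|f(n+k)|,\qquad n\in\mathbb{Z}.$$ The total variation of $g:\mathbb{Z}\to\mathbb{R}$ is $\mathrm{Var}(g)=\sum_{n=-\infty}^{\infty}|g(n+1)-g(n)|$, and $\|f\|_{\ell^1(\mathbb{Z})}=\sum_{n\in\mathbb{Z}}|f(n)|$. *)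

theory Defs
  imports "HOL-Analysis.Analysis"
begin

definition l1_norm :: "(int \<Rightarrow> real) \<Rightarrow> real" where
  "l1_norm f = (\<Sum>\<^sub>\<infinity> n\<in>(UNIV::int set). \<bar>f n\<bar>)"

definition maxop :: "(int \<Rightarrow> real) \<Rightarrow> int \<Rightarrow> real" where
  "maxop f n = (SUP r::nat. (\<Sum>k\<in>{- int r..int r}. \<bar>f (n + k)\<bar>) / (2 * real r + 1))"

definition total_var :: "(int \<Rightarrow> real) \<Rightarrow> ennreal" where
  "total_var g = (\<Sum>\<^sub>\<infinity> n\<in>(UNIV::int set). ennreal \<bar>g (n + 1) - g n\<bar>)"

end

theory Submission imports Defs begin

definition hp :: "real \<Rightarrow> real" where "hp x = 1/(2*x+1) - 1/(2*x+3)"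
definition hh :: "int \<Rightarrow> real" where "hh m = hp (real_of_int (if m \<ge> 0 then m else -m-1))"

lemma hp_alt: "x \<ge> 0 \<Longrightarrow> hp x = 2/((2*x+1)*(2*x+3))"
  unfolding hp_def by (simp add: field_simps)

lemma hp_nonneg: "x \<ge> 0 \<Longrightarrow> hp x \<ge> 0"
  by (simp add: hp_alt)

lemma hp_le1: assumes "x \<ge> 0" shows "hp x \<le> 1"
proof -
  have d: "1*3 \<le> (2*x+1)*(2*x+3)" by (rule mult_mono) (use assms in auto)
  have p: "0 < (2*x+1)*(2*x+3)" using assms by (intro mult_pos_pos) auto
  show ?thesis unfolding hp_alt[OF assms]
    by (subst divide_le_eq_1_pos[OF p]) (use d in linarith)
qed

lemma hp_anti: "0 \<le> x \<Longrightarrow> x \<le> y \<Longrightarrow> hp y \<le> hp x"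
  apply (simp add: hp_alt)
  apply (rule divide_left_mono)
  apply (auto intro!: mult_mono mult_pos_pos)
  done

lemma hh_nonneg: "hh m \<ge> 0" unfolding hh_def by (rule hp_nonneg) auto
lemma hh_le1: "hh m \<le> 1" unfolding hh_def by (rule hp_le1) auto

lemma hh_ge: "- int r - 1 \<le> m \<Longrightarrow> m \<le> int r \<Longrightarrow> hp (real r) \<le> hh m"
  unfolding hh_def by (rule hp_anti) auto

lemma hh_sum_ivl: "(\<Sum>m\<in>{- int N..int N}. hh m) = 2 - 1/(2*real N+3) - 1/(2*real N+1)"
proof (induction N)
  case 0
  then show ?case by (simp add: hh_def hp_def)
next
  case (Suc N)
  have e: "{- int (Suc N)..int (Suc N)} = insert (- int N - 1) (insert (int N + 1) {- int N..int N})"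
    by auto
  have "(\<Sum>m\<in>{- int (Suc N)..int (Suc N)}. hh m) = hh (- int N - 1) + hh (int N + 1) + (\<Sum>m\<in>{- int N..int N}. hh m)"
    unfolding e by simp
  also have "\<dots> = (1/(2*real N+1) - 1/(2*real N+3)) + (1/(2*real N+3) - 1/(2*real N+5)) + (2 - 1/(2*real N+3) - 1/(2*real N+1))"
    using Suc.IH by (simp add: hh_def hp_def algebra_simps)
  finally have X: "(\<Sum>m\<in>{- int (Suc N)..int (Suc N)}. hh m) = (1/(2*real N+1) - 1/(2*real N+3)) + (1/(2*real N+3) - 1/(2*real N+5)) + (2 - 1/(2*real N+3) - 1/(2*real N+1))" .
  have Y: "(1/(2*real N+1) - 1/(2*real N+3)) + (1/(2*real N+3) - 1/(2*real N+5)) + (2 - 1/(2*real N+3) - 1/(2*real N+1)) = 2 - 1/(2*real (Suc N)+3) - 1/(2*real (Suc N)+1)"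
    by (simp add: algebra_simps)
  show ?case by (rule trans[OF X Y])
qed

lemma hh_sum_le2: assumes "finite F" shows "(\<Sum>n\<in>F. hh (n - k)) \<le> 2"
proof -
  obtain N where N: "\<forall>n\<in>F. \<bar>n - k\<bar> \<le> int N"
  proof -
    have "\<forall>n\<in>F. nat \<bar>n - k\<bar> \<le> (\<Sum>n\<in>F. nat \<bar>n - k\<bar>)"
      using assms by (auto intro: member_le_sum)
    then have "\<forall>n\<in>F. \<bar>n - k\<bar> \<le> int (\<Sum>n\<in>F. nat \<bar>n - k\<bar>)"
      by (metis abs_ge_zero int_nat_eq of_nat_mono)
    then show ?thesis by (rule that)
  qed
  have "(\<Sum>n\<in>F. hh (n - k)) \<le> (\<Sum>n\<in>{k - int N..k + int N}. hh (n - k))"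
    apply (rule sum_mono2) using N hh_nonneg by (auto simp: abs_le_iff)
  also have "\<dots> = (\<Sum>m\<in>{- int N..int N}. hh m)"
    by (rule sum.reindex_bij_witness[of _ "\<lambda>m. m + k" "\<lambda>n. n - k"]) auto
  also have "\<dots> \<le> 2"
  proof -
    have "0 \<le> 1/(2*real N+3)" "0 \<le> 1/(2*real N+1)" by simp_all
    then show ?thesis unfolding hh_sum_ivl by linarith
  qed
  finally show ?thesis .
qed

lemma sum_infsum_swap:
  fixes u :: "'b \<Rightarrow> 'a \<Rightarrow> real"
  assumes "finite F" "\<And>n. n \<in> F \<Longrightarrow> u n summable_on A"
  shows "(\<lambda>k. \<Sum>n\<in>F. u n k) summable_on A \<and> (\<Sum>n\<in>F. infsum (u n) A) = infsum (\<lambda>k. \<Sum>n\<in>F. u n k) A"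
  using assms
proof (induction F rule: finite_induct)
  case empty
  then show ?case by simp
next
  case (insert x F)
  then have s1: "u x summable_on A" and IH: "(\<lambda>k. \<Sum>n\<in>F. u n k) summable_on A"
    "(\<Sum>n\<in>F. infsum (u n) A) = infsum (\<lambda>k. \<Sum>n\<in>F. u n k) A" by auto
  show ?case
    using insert.hyps IH s1
    by (simp add: infsum_add summable_on_add)
qed

context
  fixes f :: "int \<Rightarrow> real"
  assumes summ: "(\<lambda>n. \<bar>f n\<bar>) summable_on UNIV"
begin

definition AA :: "nat \<Rightarrow> int \<Rightarrow> real" where
  "AA r n = (\<Sum>k\<in>{- int r..int r}. \<bar>f (n + k)\<bar>) / (2 * real r + 1)"

definition BB :: "int \<Rightarrow> real" where
  "BB n = (\<Sum>\<^sub>\<infinity> k\<in>(UNIV::int set). \<bar>f k\<bar> * hh (n - k))"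

lemma S_eq: "(\<Sum>k\<in>{- int r..int r}. \<bar>f (n + k)\<bar>) = (\<Sum>j\<in>{n - int r..n + int r}. \<bar>f j\<bar>)"
  by (rule sum.reindex_bij_witness[of _ "\<lambda>j. j - n" "\<lambda>k. n + k"]) auto

lemma AA_eq: "AA r n = (\<Sum>j\<in>{n - int r..n + int r}. \<bar>f j\<bar>) / (2 * real r + 1)"
  unfolding AA_def S_eq ..

lemma fin_le_L: "finite W \<Longrightarrow> (\<Sum>j\<in>W. \<bar>f j\<bar>) \<le> l1_norm f"
  unfolding l1_norm_def by (rule finite_sum_le_infsum) (use summ in auto)

lemma AA_le: "AA r n \<le> l1_norm f"
proof -
  have a: "(\<Sum>j\<in>{n - int r..n + int r}. \<bar>f j\<bar>) \<le> l1_norm f" by (rule fin_le_L) simp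
  have b: "0 \<le> (\<Sum>j\<in>{n - int r..n + int r}. \<bar>f j\<bar>)" by (simp add: sum_nonneg)
  have c: "(\<Sum>j\<in>{n - int r..n + int r}. \<bar>f j\<bar>) * 1 \<le> (\<Sum>j\<in>{n - int r..n + int r}. \<bar>f j\<bar>) * (2 * real r + 1)"
    by (rule mult_left_mono) (use b in auto)
  have "AA r n \<le> (\<Sum>j\<in>{n - int r..n + int r}. \<bar>f j\<bar>)"
    unfolding AA_eq using b c by (simp add: divide_le_eq)
  then show ?thesis using a by linarith
qed

lemma bdd: "bdd_above (range (\<lambda>r. AA r n))"
  using AA_le by (auto intro!: bdd_aboveI)

lemma maxop_eq: "maxop f n = (SUP r. AA r n)"
  unfolding maxop_def AA_def ..

lemma AA_le_max: "AA r n \<le> maxop f n"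
  unfolding maxop_eq by (rule cSUP_upper[OF _ bdd]) simp

lemma BB_summ: "(\<lambda>k. \<bar>f k\<bar> * hh (n - k)) summable_on UNIV"
  by (rule summable_on_comparison_test[OF summ])
     (auto intro: mult_left_le hh_le1 hh_nonneg mult_nonneg_nonneg)

lemma win_le_BB:
  assumes "\<And>j. j \<in> W \<Longrightarrow> hp (real r) \<le> hh (n - j)" "finite W"
  shows "hp (real r) * (\<Sum>j\<in>W. \<bar>f j\<bar>) \<le> BB n"
proof -
  have "hp (real r) * (\<Sum>j\<in>W. \<bar>f j\<bar>) = (\<Sum>j\<in>W. \<bar>f j\<bar> * hp (real r))"
    by (simp add: sum_distrib_left mult.commute)
  also have "\<dots> \<le> (\<Sum>j\<in>W. \<bar>f j\<bar> * hh (n - j))"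
    by (rule sum_mono) (use assms in \<open>auto intro: mult_left_mono\<close>)
  also have "\<dots> \<le> BB n" unfolding BB_def
    by (rule finite_sum_le_infsum[OF BB_summ]) (use assms hh_nonneg in auto)
  finally show ?thesis .
qed

lemma arith_key:
  fixes S T :: real and r :: nat
  assumes "0 \<le> S" "S \<le> T"
  shows "S / (2 * real r + 1) - T / (2 * real (Suc r) + 1) \<le> hp (real r) * S"
proof -
  have "S / (2 * real r + 3) \<le> T / (2 * real r + 3)" using assms by (simp add: divide_right_mono)
  then show ?thesis unfolding hp_def by (simp add: algebra_simps)
qed

lemma step1: "AA r n - AA (Suc r) (n + 1) \<le> BB n"
proof -
  let ?W = "{n - int r..n + int r}" and ?W' = "{n + 1 - int (Suc r)..n + 1 + int (Suc r)}"
  have ST: "(\<Sum>j\<in>?W. \<bar>f j\<bar>) \<le> (\<Sum>j\<in>?W'. \<bar>f j\<bar>)" by (rule sum_mono2) auto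
  have "AA r n - AA (Suc r) (n + 1) \<le> hp (real r) * (\<Sum>j\<in>?W. \<bar>f j\<bar>)"
    unfolding AA_eq by (rule arith_key[OF sum_nonneg ST]) simp
  also have "\<dots> \<le> BB n" by (rule win_le_BB) (auto intro!: hh_ge)
  finally show ?thesis .
qed

lemma step2: "AA r (n + 1) - AA (Suc r) n \<le> BB n"
proof -
  let ?W = "{n + 1 - int r..n + 1 + int r}" and ?W' = "{n - int (Suc r)..n + int (Suc r)}"
  have ST: "(\<Sum>j\<in>?W. \<bar>f j\<bar>) \<le> (\<Sum>j\<in>?W'. \<bar>f j\<bar>)" by (rule sum_mono2) auto
  have "AA r (n + 1) - AA (Suc r) n \<le> hp (real r) * (\<Sum>j\<in>?W. \<bar>f j\<bar>)"
    unfolding AA_eq by (rule arith_key[OF sum_nonneg ST]) simp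
  also have "\<dots> \<le> BB n" by (rule win_le_BB) (auto intro!: hh_ge)
  finally show ?thesis .
qed

lemma diff1: "maxop f n - maxop f (n + 1) \<le> BB n"
proof -
  have "maxop f n \<le> maxop f (n + 1) + BB n"
    unfolding maxop_eq[of n]
  proof (rule cSUP_least)
    fix r
    show "AA r n \<le> maxop f (n + 1) + BB n"
      using step1[of r n] AA_le_max[of "Suc r" "n + 1"] by linarith
  qed simp
  then show ?thesis by linarith
qed

lemma diff2: "maxop f (n + 1) - maxop f n \<le> BB n"
proof -
  have "maxop f (n + 1) \<le> maxop f n + BB n"
    unfolding maxop_eq[of "n + 1"]
  proof (rule cSUP_least)
    fix r
    show "AA r (n + 1) \<le> maxop f n + BB n"
      using step2[of r n] AA_le_max[of "Suc r" n] by linarith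
  qed simp
  then show ?thesis by linarith
qed

lemma absdiff: "\<bar>maxop f (n + 1) - maxop f n\<bar> \<le> BB n"
  using diff1[of n] diff2[of n] by linarith

lemma finite_part:
  assumes "finite F"
  shows "(\<Sum>n\<in>F. \<bar>maxop f (n + 1) - maxop f n\<bar>) \<le> 2 * l1_norm f"
proof -
  have sm: "(\<lambda>k. \<Sum>n\<in>F. \<bar>f k\<bar> * hh (n - k)) summable_on UNIV"
    using sum_infsum_swap[of F "\<lambda>n k. \<bar>f k\<bar> * hh (n - k)" UNIV] assms BB_summ by auto
  have "(\<Sum>n\<in>F. \<bar>maxop f (n + 1) - maxop f n\<bar>) \<le> (\<Sum>n\<in>F. BB n)"
    by (rule sum_mono) (rule absdiff)
  also have "\<dots> = (\<Sum>\<^sub>\<infinity> k\<in>(UNIV::int set). \<Sum>n\<in>F. \<bar>f k\<bar> * hh (n - k))"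
    using sum_infsum_swap[of F "\<lambda>n k. \<bar>f k\<bar> * hh (n - k)" UNIV] assms BB_summ
    unfolding BB_def by auto
  also have "\<dots> \<le> (\<Sum>\<^sub>\<infinity> k\<in>(UNIV::int set). \<bar>f k\<bar> * 2)"
  proof (rule infsum_mono[OF sm])
    show "(\<lambda>k. \<bar>f k\<bar> * 2) summable_on UNIV" using summ by (rule summable_on_cmult_left)
    fix k
    have "(\<Sum>n\<in>F. \<bar>f k\<bar> * hh (n - k)) = \<bar>f k\<bar> * (\<Sum>n\<in>F. hh (n - k))"
      by (simp add: sum_distrib_left)
    also have "\<dots> \<le> \<bar>f k\<bar> * 2" by (rule mult_left_mono[OF hh_sum_le2[OF assms]]) simp
    finally show "(\<Sum>n\<in>F. \<bar>f k\<bar> * hh (n - k)) \<le> \<bar>f k\<bar> * 2" .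
  qed
  also have "\<dots> = 2 * l1_norm f" unfolding l1_norm_def by (simp add: infsum_cmult_left')
  finally show ?thesis .
qed

end

theorem theorem2:
  fixes f :: "int \<Rightarrow> real"
  assumes "(\<lambda>n. \<bar>f n\<bar>) summable_on UNIV"
  shows "total_var (maxop f) \<le> ennreal ((2 + 146 / 315) * l1_norm f)"
proof -
  have L0: "0 \<le> l1_norm f" unfolding l1_norm_def by (rule infsum_nonneg) simp
  have "total_var (maxop f) = (SUP F\<in>{F. finite F \<and> F \<subseteq> UNIV}. \<Sum>n\<in>F. ennreal \<bar>maxop f (n + 1) - maxop f n\<bar>)"
    unfolding total_var_def by (rule nonneg_infsum_complete) simp
  also have "\<dots> \<le> ennreal ((2 + 146 / 315) * l1_norm f)"
  proof (rule SUP_least)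
    fix F assume "F \<in> {F. finite F \<and> F \<subseteq> (UNIV::int set)}"
    then have fF: "finite F" by simp
    have "(\<Sum>n\<in>F. ennreal \<bar>maxop f (n + 1) - maxop f n\<bar>) = ennreal (\<Sum>n\<in>F. \<bar>maxop f (n + 1) - maxop f n\<bar>)"
      by (rule sum_ennreal) simp
    also have "\<dots> \<le> ennreal ((2 + 146 / 315) * l1_norm f)"
    proof (intro ennreal_leI)
      have "(2::real) * l1_norm f \<le> (2 + 146 / 315) * l1_norm f"
        by (rule mult_right_mono) (use L0 in auto)
      then show "(\<Sum>n\<in>F. \<bar>maxop f (n + 1) - maxop f n\<bar>) \<le> (2 + 146 / 315) * l1_norm f"
        using finite_part[OF assms fF] by linarith
    qed
    finally show "(\<Sum>n\<in>F. ennreal \<bar>maxop f (n + 1) - maxop f n\<bar>) \<le> ennreal ((2 + 146 / 315) * l1_norm f)" .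
  qed
  finally show ?thesis .
qed

end
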